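(* Consider the system $x(k+1)=Ax(k)+Bu(k)+w(k)$ in closed loop with the control scheme described in the context (Algorithm ATCS), suppose that $\mathbb{P}_0(x(0),\{0\})$ is feasible, and let $\gamma_z=\gamma_v=0$ (so that the cost is $J_k=N_k$), with $\lambda=1$ used in the algorithm. Then, for any disturbance realization with $w(k)\in\mathcal{W}$ for all $k$, the problems $\mathbb{P}_k(x(k),\mathcal{Z}_{f,k})$, with $\mathcal{Z}_{f,k}$ selected according to the algorithm (and with the additional constraint $N_k\le N^*_{k-1}-1$ whenever the second branch is taken), are feasible for all $k=1,2,\ldots$ reached by the algorithm, and the optimal horizon length decreases by at least $1$ at each step, i.e. $N_k^*\le N_{k-1}^*-1$.
   Context: System: $x(k+1)=Ax(k)+Bu(k)+w(k)$ with $x(k)\in\mathbb{R}^n$, $u(k)\in\mathbb{R}^m$, disturbance $w(k)\in\mathcal{W}$; state/input constraints $x(k)\in\mathcal{X}(k)$, $u(k)\in\mathcal{U}(k)$, where $\mathcal{X}(k),\mathcal{U}(k),\mathcal{W}$ are convex sets. A reference trajectory $r(k)\in\mathbb{R}^n$ is given. $K\in\mathbb{R}^{m\times n}$ is such that $A_K=A+BK$ is Schur. $\mathcal{A}\oplus\mathcal{B}=\{a+b: a\in\mathcal{A},b\in\mathcal{B}\}$, $\mathcal{A}\ominus\mathcal{B}=\{a: \{a\}\oplus\mathcal{B}\subseteq\mathcal{A}\}$. Define $\mathcal{S}(0)=\{0\}$ and $\mathcal{S}(j)=\bigoplus_{i=0}^{j-1}A_K^i\mathcal{W}$ for $j\ge1$;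 tightened sets $\mathcal{Z}_k(j)=\mathcal{X}(k+j)\ominus\mathcal{S}(j)$, $\mathcal{V}_k(j)=\mathcal{U}(k+j)\ominus K\mathcal{S}(j)$. $\|\cdot\|$ is a fixed vector norm. Problem $\mathbb{P}_k(x(k),\mathcal{Z}_f)$, for a convex set $\mathcal{Z}_f$: minimize over $N_k\in\{1,2,\ldots\}$, $v_k(0),\ldots,v_k(N_k-1)$, $z_k(0),\ldots,z_k(N_k)$ the cost $J_k=N_k+\gamma_z\sum_{j=0}^{N_k}\|z_k(j)-r(k+j)\|+\gamma_v\sum_{j=0}^{N_k-1}\|v_k(j)\|$ subject to $z_k(0)=x(k)$, $z_k(j+1)=Az_k(j)+Bv_k(j)$, $z_k(j)\in\mathcal{Z}_k(j)$ for $j=1,\ldots,N_k-1$, $v_k(j)\in\mathcal{V}_k(j)$ for $j=0,\ldots,N_k-1$, and $z_k(N_k)\in\{r(k+N_k)\}\oplus\mathcal{Z}_f$. Algorithm ATCS (parameter $\lambda$): at $k=0$ solve $\mathbb{P}_0(x(0),\{0\})$, obtaining $(J_0^*,N_0^*,v_0^*,z_0^* )$; set $\mathcal{Z}_{f,0}=\{0\}$, $\bar N=N_0^*$, apply $u(0)=v_0^*(0)$. Then, while $N^*_{k}>1$, increment $k$ and: solve $\mathbb{P}_k(x(k),\{0\})$ with optimal cost $\tilde J_k^*$ ($\tilde J_k^*=\infty$ if infeasible). If $\tilde J_k^*>J^*_{k-1}-\lambda$, set $\mathcal{Z}_{f,k}=\mathcal{Z}_{f,k-1}\oplus A_K^{N^*_{k-1}-1}\mathcal{W}$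 and solve $\mathbb{P}_k(x(k),\mathcal{Z}_{f,k})$ with the additional constraint $N_k\le N^*_{k-1}-1$, letting its solution be $(J_k^*,N_k^*,v_k^*,z_k^* )$; otherwise let $(J_k^*,N_k^*,v_k^*,z_k^* )$ be the solution of $\mathbb{P}_k(x(k),\{0\})$, set $\mathcal{Z}_{f,k}=\{0\}$ and $\bar N=N_k^*$. Apply $u(k)=v_k^*(0)$, so $x(k+1)=Ax(k)+Bu(k)+w(k)$ with $w(k)\in\mathcal{W}$ arbitrary. Upon termination, return $\bar N$. *)

theory Defs
  imports "HOL-Analysis.Analysis"
begin

definition msum :: "'a::plus set \<Rightarrow> 'a set \<Rightarrow> 'a set" where
  "msum P Q = {p + q | p q. p \<in> P \<and> q \<in> Q}"

definition pdiff :: "'a::plus set \<Rightarrow> 'a set \<Rightarrow> 'a set" where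
  "pdiff P Q = {a. msum {a} Q \<subseteq> P}"

definition schur :: "real^'n^'n \<Rightarrow> bool" where
  "schur M \<longleftrightarrow> (\<forall>(l::complex) (v::complex^'n). v \<noteq> 0 \<and> map_matrix complex_of_real M *v v = l *s v
      \<longrightarrow> cmod l < 1)"

definition mpow_app :: "real^'n^'n \<Rightarrow> nat \<Rightarrow> real^'n \<Rightarrow> real^'n" where
  "mpow_app M i = ((\<lambda>x. M *v x) ^^ i)"

fun Sset :: "real^'n^'n \<Rightarrow> (real^'n) set \<Rightarrow> nat \<Rightarrow> (real^'n) set" where
  "Sset AK W 0 = {0}"
| "Sset AK W (Suc j) = msum (Sset AK W j) (mpow_app AK j ` W)"

definition feasible ::
  "real^'n^'n \<Rightarrow> real^'m^'n \<Rightarrow> real^'n^'m \<Rightarrow> (real^'n) set \<Rightarrow>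
   (nat \<Rightarrow> (real^'n) set) \<Rightarrow> (nat \<Rightarrow> (real^'m) set) \<Rightarrow> (nat \<Rightarrow> real^'n) \<Rightarrow>
   nat \<Rightarrow> real^'n \<Rightarrow> (real^'n) set \<Rightarrow> nat \<Rightarrow> (nat \<Rightarrow> real^'m) \<Rightarrow> (nat \<Rightarrow> real^'n) \<Rightarrow> bool" where
  "feasible A B K W X U r k x Zf N v z \<longleftrightarrow>
     N \<ge> 1 \<and> z 0 = x \<and>
     (\<forall>j<N. z (Suc j) = A *v z j + B *v v j) \<and>
     (\<forall>j\<in>{1..N-1}. z j \<in> pdiff (X (k + j)) (Sset (A + B ** K) W j)) \<and>
     (\<forall>j<N. v j \<in> pdiff (U (k + j)) ((\<lambda>s. K *v s) ` Sset (A + B ** K) W j)) \<and>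
     z N \<in> msum {r (k + N)} Zf"

definition cost ::
  "real \<Rightarrow> real \<Rightarrow> (nat \<Rightarrow> real^'n) \<Rightarrow> nat \<Rightarrow> nat \<Rightarrow> (nat \<Rightarrow> real^'m) \<Rightarrow> (nat \<Rightarrow> real^'n) \<Rightarrow> real" where
  "cost gz gv r k N v z =
     real N + gz * (\<Sum>j\<le>N. norm (z j - r (k + j))) + gv * (\<Sum>j<N. norm (v j))"

definition opt_sol ::
  "real^'n^'n \<Rightarrow> real^'m^'n \<Rightarrow> real^'n^'m \<Rightarrow> (real^'n) set \<Rightarrow>
   (nat \<Rightarrow> (real^'n) set) \<Rightarrow> (nat \<Rightarrow> (real^'m) set) \<Rightarrow> (nat \<Rightarrow> real^'n) \<Rightarrow> real \<Rightarrow> real \<Rightarrow>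
   nat \<Rightarrow> real^'n \<Rightarrow> (real^'n) set \<Rightarrow> nat option \<Rightarrow> nat \<Rightarrow> (nat \<Rightarrow> real^'m) \<Rightarrow> (nat \<Rightarrow> real^'n) \<Rightarrow> bool" where
  "opt_sol A B K W X U r gz gv k x Zf Nmax N v z \<longleftrightarrow>
     feasible A B K W X U r k x Zf N v z \<and> (case Nmax of None \<Rightarrow> True | Some M \<Rightarrow> N \<le> M) \<and>
     (\<forall>N' v' z'. feasible A B K W X U r k x Zf N' v' z' \<and>
        (case Nmax of None \<Rightarrow> True | Some M \<Rightarrow> N' \<le> M) \<longrightarrow>
        cost gz gv r k N v z \<le> cost gz gv r k N' v' z')"

text \<open>Optimal value of P_k(x, {0}) (infinity if infeasible).\<close>
definition opt_val ::
  "real^'n^'n \<Rightarrow> real^'m^'n \<Rightarrow> real^'n^'m \<Rightarrow> (real^'n) set \<Rightarrow>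
   (nat \<Rightarrow> (real^'n) set) \<Rightarrow> (nat \<Rightarrow> (real^'m) set) \<Rightarrow> (nat \<Rightarrow> real^'n) \<Rightarrow> real \<Rightarrow> real \<Rightarrow>
   nat \<Rightarrow> real^'n \<Rightarrow> ereal" where
  "opt_val A B K W X U r gz gv k x =
     Inf {ereal (cost gz gv r k N v z) | N v z. feasible A B K W X U r k x {0} N v z}"

text \<open>One iteration of ATCS at time k, given the new state x = x(k) and the previous
  optimal cost J = J*_{k-1}, horizon N = N*_{k-1} and terminal set Zf = Z_{f,k-1}.
  Produces (J', N', v', z', Zf') = (J*_k, N*_k, v*_k, z*_k, Z_{f,k}).\<close>
definition atcs_step ::
  "real^'n^'n \<Rightarrow> real^'m^'n \<Rightarrow> real^'n^'m \<Rightarrow> (real^'n) set \<Rightarrow>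
   (nat \<Rightarrow> (real^'n) set) \<Rightarrow> (nat \<Rightarrow> (real^'m) set) \<Rightarrow> (nat \<Rightarrow> real^'n) \<Rightarrow> real \<Rightarrow> real \<Rightarrow> real \<Rightarrow>
   nat \<Rightarrow> real^'n \<Rightarrow> real \<Rightarrow> nat \<Rightarrow> (real^'n) set \<Rightarrow>
   real \<Rightarrow> nat \<Rightarrow> (nat \<Rightarrow> real^'m) \<Rightarrow> (nat \<Rightarrow> real^'n) \<Rightarrow> (real^'n) set \<Rightarrow> bool" where
  "atcs_step A B K W X U r gz gv lam k x J N Zf J' N' v' z' Zf' \<longleftrightarrow>
     (if opt_val A B K W X U r gz gv k x > ereal (J - lam) then
        Zf' = msum Zf (mpow_app (A + B ** K) (N - 1) ` W) \<and>
        opt_sol A B K W X U r gz gv k x Zf' (Some (N - 1)) N' v' z'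
      else
        Zf' = {0} \<and> opt_sol A B K W X U r gz gv k x {0} None N' v' z') \<and>
     J' = cost gz gv r k N' v' z'"

text \<open>States (k, x(k), J*_k, N*_k, v*_k, z*_k, Z_{f,k}) reachable by the closed loop
  under ATCS, for some admissible disturbance realisation and some choice among optimal
  solutions, starting from x0.\<close>
inductive atcs_run ::
  "real^'n^'n \<Rightarrow> real^'m^'n \<Rightarrow> real^'n^'m \<Rightarrow> (real^'n) set \<Rightarrow>
   (nat \<Rightarrow> (real^'n) set) \<Rightarrow> (nat \<Rightarrow> (real^'m) set) \<Rightarrow> (nat \<Rightarrow> real^'n) \<Rightarrow> real \<Rightarrow> real \<Rightarrow> real \<Rightarrow>
   real^'n \<Rightarrow> nat \<Rightarrow> real^'n \<Rightarrow> real \<Rightarrow> nat \<Rightarrow> (nat \<Rightarrow> real^'m) \<Rightarrow> (nat \<Rightarrow> real^'n) \<Rightarrow> (real^'n) set \<Rightarrow> bool"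
  for A B K W X U r gz gv lam x0 where
  init: "opt_sol A B K W X U r gz gv 0 x0 {0} None N v z \<Longrightarrow>
         atcs_run A B K W X U r gz gv lam x0 0 x0 (cost gz gv r 0 N v z) N v z {0}"
| step: "atcs_run A B K W X U r gz gv lam x0 k x J N v z Zf \<Longrightarrow> N > 1 \<Longrightarrow> w \<in> W \<Longrightarrow>
         atcs_step A B K W X U r gz gv lam (Suc k) (A *v x + B *v v 0 + w) J N Zf J' N' v' z' Zf' \<Longrightarrow>
         atcs_run A B K W X U r gz gv lam x0 (Suc k) (A *v x + B *v v 0 + w) J' N' v' z' Zf'"

end

theory Submission
  imports Defs
begin

lemma mpow_app_0[simp]: "mpow_app M 0 x = x"
  by (simp add: mpow_app_def)

lemma mpow_app_Suc[simp]: "mpow_app M (Suc j) x = M *v mpow_app M j x"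
  by (simp add: mpow_app_def)

lemma pdiff_shift:
  assumes "a \<in> pdiff P (Sset AK W (Suc j))" "w \<in> W"
  shows "a + mpow_app AK j w \<in> pdiff P (Sset AK W j)"
proof -
  have "a + mpow_app AK j w + s \<in> P" if "s \<in> Sset AK W j" for s
  proof -
    have "s + mpow_app AK j w \<in> Sset AK W (Suc j)"
      using that assms(2) by (auto simp: msum_def)
    hence "a + (s + mpow_app AK j w) \<in> P" using assms(1) unfolding pdiff_def msum_def by blast
    thus ?thesis by (simp add: algebra_simps)
  qed
  thus ?thesis by (auto simp: pdiff_def msum_def)
qed

lemma pdiff_shiftK:
  fixes K :: "real^'n^'m"
  assumes "a \<in> pdiff P ((\<lambda>s. K *v s) ` Sset AK W (Suc j))" "w \<in> W"
  shows "a + K *v mpow_app AK j w \<in> pdiff P ((\<lambda>s. K *v s) ` Sset AK W j)"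
proof -
  have "a + K *v mpow_app AK j w + K *v s \<in> P" if "s \<in> Sset AK W j" for s
  proof -
    have "s + mpow_app AK j w \<in> Sset AK W (Suc j)"
      using that assms(2) by (auto simp: msum_def)
    hence "a + K *v (s + mpow_app AK j w) \<in> P" using assms(1) unfolding pdiff_def msum_def by blast
    thus ?thesis by (simp add: algebra_simps matrix_vector_right_distrib)
  qed
  thus ?thesis by (auto simp: pdiff_def msum_def)
qed

lemma shift_feasible:
  assumes F: "feasible A B K W X U r k x Zf N v z" and N: "N > 1" and w: "w \<in> W"
  shows "feasible A B K W X U r (Suc k) (A *v x + B *v v 0 + w)
     (msum Zf (mpow_app (A + B ** K) (N - 1) ` W)) (N - 1)
     (\<lambda>j. v (Suc j) + K *v mpow_app (A + B ** K) j w)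
     (\<lambda>j. z (Suc j) + mpow_app (A + B ** K) j w)"
proof -
  let ?M = "A + B ** K"
  from F have z0: "z 0 = x" and dyn: "\<forall>j<N. z (Suc j) = A *v z j + B *v v j"
    and sc: "\<forall>j\<in>{1..N-1}. z j \<in> pdiff (X (k + j)) (Sset ?M W j)"
    and ic: "\<forall>j<N. v j \<in> pdiff (U (k + j)) ((\<lambda>s. K *v s) ` Sset ?M W j)"
    and tc: "z N \<in> msum {r (k + N)} Zf"
    by (auto simp: feasible_def)
  have 1: "N - 1 \<ge> 1" using N by simp
  have 2: "z (Suc 0) + mpow_app ?M 0 w = A *v x + B *v v 0 + w"
    using dyn N z0 by simp
  have 3: "z (Suc (Suc j)) + mpow_app ?M (Suc j) w =
      A *v (z (Suc j) + mpow_app ?M j w) + B *v (v (Suc j) + K *v mpow_app ?M j w)"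
    if "j < N - 1" for j
  proof -
    have "z (Suc (Suc j)) = A *v z (Suc j) + B *v v (Suc j)" using dyn that by simp
    moreover have "mpow_app ?M (Suc j) w = A *v mpow_app ?M j w + B *v (K *v mpow_app ?M j w)"
      by (simp add: matrix_vector_mult_add_rdistrib matrix_vector_mul_assoc)
    ultimately show ?thesis by (simp add: matrix_vector_right_distrib algebra_simps)
  qed
  have 4: "z (Suc j) + mpow_app ?M j w \<in> pdiff (X (Suc k + j)) (Sset ?M W j)"
    if "j \<in> {1..N-1-1}" for j
  proof -
    have "Suc j \<in> {1..N-1}" using that by auto
    with sc have "z (Suc j) \<in> pdiff (X (k + Suc j)) (Sset ?M W (Suc j))" by blast
    from pdiff_shift[OF this w] show ?thesis by simp
  qed
  have 5: "v (Suc j) + K *v mpow_app ?M j w \<in> pdiff (U (Suc k + j)) ((\<lambda>s. K *v s) ` Sset ?M W j)"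
    if "j < N - 1" for j
  proof -
    have "Suc j < N" using that by auto
    with ic have "v (Suc j) \<in> pdiff (U (k + Suc j)) ((\<lambda>s. K *v s) ` Sset ?M W (Suc j))" by blast
    from pdiff_shiftK[OF this w] show ?thesis by simp
  qed
  have 6: "z (Suc (N - 1)) + mpow_app ?M (N - 1) w \<in>
      msum {r (Suc k + (N - 1))} (msum Zf (mpow_app ?M (N - 1) ` W))"
  proof -
    have e1: "Suc (N - 1) = N" "Suc k + (N - 1) = k + N" using N by auto
    from tc obtain q where q: "q \<in> Zf" "z N = r (k + N) + q" by (auto simp: msum_def)
    have "z N + mpow_app ?M (N - 1) w = r (k + N) + (q + mpow_app ?M (N - 1) w)"
      using q by (simp add: algebra_simps)
    moreover have "q + mpow_app ?M (N - 1) w \<in> msum Zf (mpow_app ?M (N - 1) ` W)"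
      using q w by (auto simp: msum_def)
    ultimately show ?thesis unfolding e1 by (auto simp: msum_def)
  qed
  show ?thesis unfolding feasible_def using 1 2 3 4 5 6 by auto
qed

lemma opt_exists:
  assumes "feasible A B K W X U r k x Zf N v z"
    "case Nmax of None \<Rightarrow> True | Some M \<Rightarrow> N \<le> M"
  shows "\<exists>N v z. opt_sol A B K W X U r 0 0 k x Zf Nmax N v z"
proof -
  let ?P = "\<lambda>N. \<exists>v z. feasible A B K W X U r k x Zf N v z \<and> (case Nmax of None \<Rightarrow> True | Some M \<Rightarrow> N \<le> M)"
  have "?P N" using assms by blast
  hence "?P (LEAST N. ?P N)" by (rule LeastI)
  then obtain v' z' where vz: "feasible A B K W X U r k x Zf (LEAST N. ?P N) v' z'"
    "(case Nmax of None \<Rightarrow> True | Some M \<Rightarrow> (LEAST N. ?P N) \<le> M)" by blast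
  have "\<forall>N' v z. feasible A B K W X U r k x Zf N' v z \<and> (case Nmax of None \<Rightarrow> True | Some M \<Rightarrow> N' \<le> M)
     \<longrightarrow> (LEAST N. ?P N) \<le> N'"
    by (auto intro: Least_le)
  with vz show ?thesis unfolding opt_sol_def cost_def by fastforce
qed

lemma run_inv:
  assumes "atcs_run A B K W X U r 0 0 lam x0 k x J N v z Zf"
  shows "feasible A B K W X U r k x Zf N v z \<and> J = real N"
  using assms
proof induction
  case (init N v z)
  then show ?case by (simp add: opt_sol_def cost_def)
next
  case (step k x J N v z Zf w J' N' v' z' Zf')
  then show ?case by (auto simp: atcs_step_def opt_sol_def cost_def split: if_splits)
qed

lemma main_step:
  assumes R: "atcs_run A B K W X U r 0 0 1 x0 k x J N v z Zf" and N: "1 < N" and w: "w \<in> W"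
  shows "(\<exists>J' N' v' z' Zf'. atcs_step A B K W X U r 0 0 1 (Suc k) (A *v x + B *v v 0 + w) J N Zf J' N' v' z' Zf') \<and>
       (\<forall>J' N' v' z' Zf'. atcs_step A B K W X U r 0 0 1 (Suc k) (A *v x + B *v v 0 + w) J N Zf J' N' v' z' Zf'
          \<longrightarrow> N' \<le> N - 1)"
proof (rule conjI)
  from run_inv[OF R] have F: "feasible A B K W X U r k x Zf N v z" and J: "J = real N" by auto
  define x' where "x' = A *v x + B *v v 0 + w"
  define Zn where "Zn = msum Zf (mpow_app (A + B ** K) (N - 1) ` W)"
  let ?S = "{ereal (cost 0 0 r (Suc k) N v z) | N v z. feasible A B K W X U r (Suc k) x' {0} N v z}"
  have ov: "opt_val A B K W X U r 0 0 (Suc k) x' = Inf ?S" by (simp add: opt_val_def)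
  show "\<exists>J' N' v' z' Zf'. atcs_step A B K W X U r 0 0 1 (Suc k) (A *v x + B *v v 0 + w) J N Zf J' N' v' z' Zf'"
  proof (cases "opt_val A B K W X U r 0 0 (Suc k) x' > ereal (J - 1)")
    case True
    define Nm where "Nm = N - 1"
    have "\<exists>N v z. opt_sol A B K W X U r 0 0 (Suc k) x' Zn (Some Nm) N v z"
      using opt_exists[OF shift_feasible[OF F N w], where Nmax="Some Nm"]
      unfolding x'_def Zn_def Nm_def by simp
    then show ?thesis using True unfolding Nm_def atcs_step_def x'_def[symmetric] Zn_def by auto
  next
    case False
    have "?S \<noteq> {}"
    proof
      assume "?S = {}"
      hence "opt_val A B K W X U r 0 0 (Suc k) x' = \<infinity>" using ov by (simp add: top_ereal_def)
      thus False using False by simp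
    qed
    then obtain N1 v1 z1 where "feasible A B K W X U r (Suc k) x' {0} N1 v1 z1" by blast
    from opt_exists[OF this, where Nmax=None]
    have "\<exists>N v z. opt_sol A B K W X U r 0 0 (Suc k) x' {0} None N v z" by simp
    then show ?thesis using False unfolding atcs_step_def x'_def[symmetric] by auto
  qed
  show "\<forall>J' N' v' z' Zf'. atcs_step A B K W X U r 0 0 1 (Suc k) (A *v x + B *v v 0 + w) J N Zf J' N' v' z' Zf'
          \<longrightarrow> N' \<le> N - 1"
  proof (intro allI impI)
    fix J' N' v' z' Zf'
    assume S: "atcs_step A B K W X U r 0 0 1 (Suc k) (A *v x + B *v v 0 + w) J N Zf J' N' v' z' Zf'"
    show "N' \<le> N - 1"
    proof (cases "opt_val A B K W X U r 0 0 (Suc k) x' > ereal (J - 1)")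
      case True
      then show ?thesis using S unfolding atcs_step_def x'_def[symmetric] opt_sol_def by auto
    next
      case False
      hence os: "opt_sol A B K W X U r 0 0 (Suc k) x' {0} None N' v' z'"
        using S unfolding atcs_step_def x'_def[symmetric] by auto
      have "ereal (real N') \<le> Inf ?S"
      proof (rule Inf_greatest)
        fix y assume "y \<in> ?S"
        then obtain N2 v2 z2 where "y = ereal (cost 0 0 r (Suc k) N2 v2 z2)"
          "feasible A B K W X U r (Suc k) x' {0} N2 v2 z2" by blast
        with os show "ereal (real N') \<le> y" unfolding opt_sol_def by (auto simp: cost_def)
      qed
      also have "\<dots> \<le> ereal (J - 1)" using False ov by simp
      finally have "real N' \<le> real N - 1" using J by simp
      thus ?thesis by linarith
    qed
  qed
qed

theorem corollary1:
  fixes A :: "real^'n^'n" and B :: "real^'m^'n" and K :: "real^'n^'m"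
    and W :: "(real^'n) set" and X :: "nat \<Rightarrow> (real^'n) set" and U :: "nat \<Rightarrow> (real^'m) set"
    and r :: "nat \<Rightarrow> real^'n" and x0 :: "real^'n"
  assumes convW: "convex W"
    and convX: "\<And>k. convex (X k)"
    and convU: "\<And>k. convex (U k)"
    and schurK: "schur (A + B ** K)"
    and feas0: "\<exists>N v z. feasible A B K W X U r 0 x0 {0} N v z"
  shows "(\<exists>N v z. opt_sol A B K W X U r 0 0 0 x0 {0} None N v z) \<and>
    (\<forall>k x J N v z Zf w.
       atcs_run A B K W X U r 0 0 1 x0 k x J N v z Zf \<and> 1 < N \<and> w \<in> W \<longrightarrow>
       (\<exists>J' N' v' z' Zf'. atcs_step A B K W X U r 0 0 1 (Suc k) (A *v x + B *v v 0 + w) J N Zf J' N' v' z' Zf') \<and>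
       (\<forall>J' N' v' z' Zf'. atcs_step A B K W X U r 0 0 1 (Suc k) (A *v x + B *v v 0 + w) J N Zf J' N' v' z' Zf'
          \<longrightarrow> N' \<le> N - 1))"
proof -
  have "\<exists>N v z. opt_sol A B K W X U r 0 0 0 x0 {0} None N v z"
    using feas0 opt_exists[where Nmax=None] by fastforce
  moreover have "atcs_run A B K W X U r 0 0 1 x0 k x J N v z Zf \<and> 1 < N \<and> w \<in> W \<longrightarrow>
       (\<exists>J' N' v' z' Zf'. atcs_step A B K W X U r 0 0 1 (Suc k) (A *v x + B *v v 0 + w) J N Zf J' N' v' z' Zf') \<and>
       (\<forall>J' N' v' z' Zf'. atcs_step A B K W X U r 0 0 1 (Suc k) (A *v x + B *v v 0 + w) J N Zf J' N' v' z' Zf'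
          \<longrightarrow> N' \<le> N - 1)" for k x J N v z Zf w
  proof
    assume "atcs_run A B K W X U r 0 0 1 x0 k x J N v z Zf \<and> 1 < N \<and> w \<in> W"
    then show "(\<exists>J' N' v' z' Zf'. atcs_step A B K W X U r 0 0 1 (Suc k) (A *v x + B *v v 0 + w) J N Zf J' N' v' z' Zf') \<and>
       (\<forall>J' N' v' z' Zf'. atcs_step A B K W X U r 0 0 1 (Suc k) (A *v x + B *v v 0 + w) J N Zf J' N' v' z' Zf'
          \<longrightarrow> N' \<le> N - 1)"
      by (elim conjE) (rule main_step)
  qed
  ultimately show ?thesis by blast
qed

end
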